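(* Let $\{\mathbb{G}_n,\ n=2,3,\ldots\}$ be a sequence of random graphs as described in the context, with $\lim_{n\to\infty}|V_n|=\infty$, satisfying: (A) for each $n$, $D_{n,k}$ has the same distribution as $D_{n,1}$ for all $k\in V_n$, and for all distinct $k,\ell\in V_n$, $(D_{n,k},D_{n,\ell})$ has the same joint distribution as $(D_{n,1},D_{n,2})$; (B) there is an $\mathbb{N}$-valued random variable $D$ with pmf $p=(p(d),\ d=0,1,\ldots)$ such that $D_{n,1}\to D$ in distribution as $n\to\infty$; (C) for each $d=0,1,\ldots$, $\lim_{n\to\infty}\mathrm{Cov}\big[\mathbf{1}[D_{n,1}=d],\mathbf{1}[D_{n,2}=d]\big]=0$. Then for every $d=0,1,\ldots$, $P_n(d)\to p(d)$ in probability as $n\to\infty$.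
   Context: All random variables are defined on a common probability space $(\Omega,\mathcal{F},\mathbb{P})$. For each $n=2,3,\ldots$, $\mathbb{G}_n$ is a random (possibly directed, self-loops allowed) graph on the deterministic finite node set $V_n=\{1,\ldots,k_n\}$ with $k_n\ge 2$, determined by $\{0,1\}$-valued edge random variables $\{\chi_n(k,\ell),\ k,\ell\in V_n\}$ ($\chi_n(k,\ell)=1$ iff there is an edge from $k$ to $\ell$). The degree of node $k$ is $D_{n,k}=\sum_{\ell\in V_n}\chi_n(k,\ell)$. For $d=0,1,\ldots$, $N_n(d)=\sum_{k\in V_n}\mathbf{1}[D_{n,k}=d]$ and $P_n(d)=N_n(d)/|V_n|$ is the fraction of nodes with degree $d$. $\mathbb{N}=\{0,1,2,\ldots\}$. *)

theory Defs
  imports "HOL-Probability.Probability"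
begin

text \<open>Degree of node k in graph n: number of l in V_n = {1..kn n} with an edge k -> l.
  The edge indicator chi n k l \<omega> is bool-valued (True iff edge from k to l).\<close>
definition degree :: "(nat \<Rightarrow> nat) \<Rightarrow> (nat \<Rightarrow> nat \<Rightarrow> nat \<Rightarrow> 'a \<Rightarrow> bool) \<Rightarrow> nat \<Rightarrow> nat \<Rightarrow> 'a \<Rightarrow> nat"
  where "degree kn chi n k \<omega> = card {l \<in> {1..kn n}. chi n k l \<omega>}"

definition node_count :: "(nat \<Rightarrow> nat) \<Rightarrow> (nat \<Rightarrow> nat \<Rightarrow> nat \<Rightarrow> 'a \<Rightarrow> bool) \<Rightarrow> nat \<Rightarrow> nat \<Rightarrow> 'a \<Rightarrow> nat"
  where "node_count kn chi n d \<omega> = card {k \<in> {1..kn n}. degree kn chi n k \<omega> = d}"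

definition degree_frac :: "(nat \<Rightarrow> nat) \<Rightarrow> (nat \<Rightarrow> nat \<Rightarrow> nat \<Rightarrow> 'a \<Rightarrow> bool) \<Rightarrow> nat \<Rightarrow> nat \<Rightarrow> 'a \<Rightarrow> real"
  where "degree_frac kn chi n d \<omega> = real (node_count kn chi n d \<omega>) / real (card {1..kn n})"

definition covar :: "'a measure \<Rightarrow> ('a \<Rightarrow> real) \<Rightarrow> ('a \<Rightarrow> real) \<Rightarrow> real"
  where "covar M X Y = (\<integral>\<omega>. (X \<omega> - (\<integral>x. X x \<partial>M)) * (Y \<omega> - (\<integral>x. Y x \<partial>M)) \<partial>M)"

definition conv_in_prob :: "'a measure \<Rightarrow> (nat \<Rightarrow> 'a \<Rightarrow> real) \<Rightarrow> real \<Rightarrow> bool"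
  where "conv_in_prob M X c \<longleftrightarrow>
    (\<forall>\<epsilon>>0. (\<lambda>n. measure M {\<omega> \<in> space M. \<bar>X n \<omega> - c\<bar> > \<epsilon>}) \<longlonglongrightarrow> 0)"

end

theory Submission
  imports Defs
begin

lemma meas_comb:
  fixes f :: "'a \<Rightarrow> 'b::countable" and g :: "'a \<Rightarrow> 'c::countable"
  assumes f: "f \<in> measurable M (count_space UNIV)" and g: "g \<in> measurable M (count_space UNIV)"
  shows "(\<lambda>\<omega>. h (f \<omega>) (g \<omega>)) \<in> measurable M (count_space UNIV)"
proof -
  have fs: "f -` {a} \<inter> space M \<in> sets M" for a using f by (simp add: measurable_count_space_eq2_countable)
  have gs: "g -` {a} \<inter> space M \<in> sets M" for a using g by (simp add: measurable_count_space_eq2_countable)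
  have "(\<lambda>\<omega>. (f \<omega>, g \<omega>)) \<in> measurable M (count_space UNIV)"
    unfolding measurable_count_space_eq2_countable
  proof (intro conjI ballI)
    fix ab :: "'b \<times> 'c"
    obtain a b where ab: "ab = (a, b)" by (cases ab)
    have "(\<lambda>\<omega>. (f \<omega>, g \<omega>)) -` {ab} \<inter> space M = (f -` {a} \<inter> space M) \<inter> (g -` {b} \<inter> space M)"
      by (auto simp: ab)
    then show "(\<lambda>\<omega>. (f \<omega>, g \<omega>)) -` {ab} \<inter> space M \<in> sets M" using fs gs by auto
  qed auto
  moreover have "(\<lambda>(a, b). h a b) \<in> measurable (count_space UNIV) (count_space UNIV)" by simp
  ultimately have "(\<lambda>(a, b). h a b) \<circ> (\<lambda>\<omega>. (f \<omega>, g \<omega>)) \<in> measurable M (count_space UNIV)"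
    by (rule measurable_comp)
  then show ?thesis by (simp add: comp_def)
qed

lemma meas_borel:
  fixes Y :: "'a \<Rightarrow> 'b::countable"
  assumes "Y \<in> measurable M (count_space UNIV)"
  shows "(\<lambda>\<omega>. (f (Y \<omega>) :: real)) \<in> borel_measurable M"
proof -
  have "f \<in> measurable (count_space UNIV) borel" by simp
  from measurable_comp[OF assms this] show ?thesis by (simp add: comp_def)
qed

lemma card_meas:
  fixes P :: "'b \<Rightarrow> 'a \<Rightarrow> bool"
  assumes "finite F" "\<And>l. l \<in> F \<Longrightarrow> P l \<in> measurable M (count_space UNIV)"
  shows "(\<lambda>\<omega>. card {l \<in> F. P l \<omega>}) \<in> measurable M (count_space UNIV)"
  using assms
proof (induction F rule: finite_induct)
  case empty
  then show ?case by simp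
next
  case (insert x F)
  have e: "card {l \<in> insert x F. P l \<omega>} = card {l \<in> F. P l \<omega>} + (if P x \<omega> then 1 else 0)" for \<omega>
  proof -
    have fin: "finite {l \<in> F. P l \<omega>}" using insert by simp
    show ?thesis
    proof (cases "P x \<omega>")
      case True
      then have "{l \<in> insert x F. P l \<omega>} = insert x {l \<in> F. P l \<omega>}" by auto
      then show ?thesis using True fin insert(2) by simp
    next
      case False
      then have "{l \<in> insert x F. P l \<omega>} = {l \<in> F. P l \<omega>}" by auto
      then show ?thesis using False by simp
    qed
  qed
  have m: "(\<lambda>\<omega>. (\<lambda>a b. a + (if b then 1 else 0)) (card {l \<in> F. P l \<omega>}) (P x \<omega>)) \<in> measurable M (count_space UNIV)"
    by (rule meas_comb) (use insert in auto)
  have eq: "(\<lambda>\<omega>. card {l \<in> insert x F. P l \<omega>}) = (\<lambda>\<omega>. (\<lambda>a b. a + (if b then 1 else 0)) (card {l \<in> F. P l \<omega>}) (P x \<omega>))"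
    using e by (intro ext) simp
  show ?case unfolding eq by (rule m)
qed

lemma cdf_point:
  fixes Y :: "'a \<Rightarrow> nat"
  assumes M: "prob_space M" and Y: "Y \<in> measurable M (count_space UNIV)"
  shows "cdf (distr M borel (\<lambda>\<omega>. real (Y \<omega>))) (real d + 1/2) - cdf (distr M borel (\<lambda>\<omega>. real (Y \<omega>))) (real d - 1/2)
           = measure M {\<omega> \<in> space M. Y \<omega> = d}"
    and "isCont (cdf (distr M borel (\<lambda>\<omega>. real (Y \<omega>)))) (real d + 1/2)"
    and "isCont (cdf (distr M borel (\<lambda>\<omega>. real (Y \<omega>)))) (real d - 1/2)"
proof -
  interpret prob_space M by (rule M)
  have rY: "(\<lambda>\<omega>. real (Y \<omega>)) \<in> borel_measurable M" using meas_borel[OF Y] .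
  interpret R: real_distribution "distr M borel (\<lambda>\<omega>. real (Y \<omega>))" using rY by simp
  have cd: "cdf (distr M borel (\<lambda>\<omega>. real (Y \<omega>))) x = measure M {\<omega> \<in> space M. real (Y \<omega>) \<le> x}" for x
    unfolding cdf_def2 by (subst measure_distr[OF rY]) (auto intro!: arg_cong[where f="measure M"])
  have s1: "{\<omega> \<in> space M. real (Y \<omega>) \<le> real d + 1/2} = {\<omega> \<in> space M. Y \<omega> \<le> d}"
  proof -
    have "real a \<le> real d + 1/2 \<longleftrightarrow> a \<le> d" for a
    proof
      assume "real a \<le> real d + 1/2"
      then have "real a < real (d + 1)" by simp
      then show "a \<le> d" by linarith
    qed simp
    then show ?thesis by auto
  qed
  have s2: "{\<omega> \<in> space M. real (Y \<omega>) \<le> real d - 1/2} = {\<omega> \<in> space M. Y \<omega> < d}"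
  proof -
    have "real a \<le> real d - 1/2 \<longleftrightarrow> a < d" for a
    proof
      assume "real a \<le> real d - 1/2"
      then have "real a < real d" by simp
      then show "a < d" by linarith
    next
      assume "a < d" then have "real a + 1 \<le> real d" by linarith
      then show "real a \<le> real d - 1/2" by simp
    qed
    then show ?thesis by auto
  qed
  have ms: "{\<omega> \<in> space M. Q (Y \<omega>)} \<in> sets M" for Q
  proof -
    have "{\<omega> \<in> space M. Q (Y \<omega>)} = Y -` {a. Q a} \<inter> space M" by auto
    then show ?thesis using measurable_sets[OF Y, of "{a. Q a}"] by simp
  qed
  have seq: "{\<omega> \<in> space M. Y \<omega> = d} = {\<omega> \<in> space M. Y \<omega> \<le> d} - {\<omega> \<in> space M. Y \<omega> < d}" by auto
  have sub: "{\<omega> \<in> space M. Y \<omega> < d} \<subseteq> {\<omega> \<in> space M. Y \<omega> \<le> d}" by auto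
  have "measure M {\<omega> \<in> space M. Y \<omega> = d} = measure M {\<omega> \<in> space M. Y \<omega> \<le> d} - measure M {\<omega> \<in> space M. Y \<omega> < d}"
    unfolding seq by (rule finite_measure_Diff[OF ms ms sub])
  then show "cdf (distr M borel (\<lambda>\<omega>. real (Y \<omega>))) (real d + 1/2) - cdf (distr M borel (\<lambda>\<omega>. real (Y \<omega>))) (real d - 1/2)
           = measure M {\<omega> \<in> space M. Y \<omega> = d}" by (simp add: cd s1 s2)
  have z: "measure (distr M borel (\<lambda>\<omega>. real (Y \<omega>))) {x} = 0" if "\<And>a. real a \<noteq> x" for x
  proof -
    have "(\<lambda>\<omega>. real (Y \<omega>)) -` {x} \<inter> space M = {}" using that by auto
    then show ?thesis by (subst measure_distr[OF rY]) auto
  qed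
  show "isCont (cdf (distr M borel (\<lambda>\<omega>. real (Y \<omega>)))) (real d + 1/2)"
    unfolding R.isCont_cdf
  proof (rule z)
    fix a show "real a \<noteq> real d + 1/2"
    proof
      assume h: "real a = real d + 1/2"
      then have "d < a" by linarith
      then have "real d + 1 \<le> real a" by linarith
      with h show False by simp
    qed
  qed
  show "isCont (cdf (distr M borel (\<lambda>\<omega>. real (Y \<omega>)))) (real d - 1/2)"
    unfolding R.isCont_cdf
  proof (rule z)
    fix a show "real a \<noteq> real d - 1/2"
    proof
      assume h: "real a = real d - 1/2"
      then have "a < d" by linarith
      then have "real a + 1 \<le> real d" by linarith
      with h show False by simp
    qed
  qed
qed


lemma meas_map:
  fixes Y :: "'a \<Rightarrow> 'b::countable"
  assumes "Y \<in> measurable M (count_space UNIV)"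
  shows "(\<lambda>\<omega>. (f (Y \<omega>) :: 'c::countable)) \<in> measurable M (count_space UNIV)"
  using meas_comb[OF assms assms, of "\<lambda>a b. f a"] by simp

lemma abs_prod_le1:
  fixes q :: real
  assumes "0 \<le> q" "q \<le> 1"
  shows "\<bar>(of_bool P - q) * (of_bool Q - q)\<bar> \<le> 1"
proof -
  have a: "\<bar>of_bool P - q\<bar> \<le> 1" using assms by (cases P) auto
  have b: "\<bar>of_bool Q - q\<bar> \<le> 1" using assms by (cases Q) auto
  have "\<bar>(of_bool P - q) * (of_bool Q - q)\<bar> = \<bar>of_bool P - q\<bar> * \<bar>of_bool Q - q\<bar>" by (simp add: abs_mult)
  also have "\<dots> \<le> 1 * 1" by (rule mult_mono) (use a b in auto)
  finally show ?thesis by simp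
qed

theorem proposition2:
  fixes M :: "'a measure"
    and kn :: "nat \<Rightarrow> nat"
    and chi :: "nat \<Rightarrow> nat \<Rightarrow> nat \<Rightarrow> 'a \<Rightarrow> bool"
    and D :: "'a \<Rightarrow> nat"
    and p :: "nat \<Rightarrow> real"
  assumes M: "prob_space M"
    and kn_ge2: "\<And>n. n \<ge> 2 \<Longrightarrow> kn n \<ge> 2"
    and chi_meas: "\<And>n k l. n \<ge> 2 \<Longrightarrow> k \<in> {1..kn n} \<Longrightarrow> l \<in> {1..kn n} \<Longrightarrow>
        chi n k l \<in> measurable M (count_space UNIV)"
    and kn_lim: "filterlim kn at_top sequentially"
    and A1: "\<And>n k. n \<ge> 2 \<Longrightarrow> k \<in> {1..kn n} \<Longrightarrow>
        distr M (count_space UNIV) (degree kn chi n k) = distr M (count_space UNIV) (degree kn chi n 1)"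
    and A2: "\<And>n k l. n \<ge> 2 \<Longrightarrow> k \<in> {1..kn n} \<Longrightarrow> l \<in> {1..kn n} \<Longrightarrow> k \<noteq> l \<Longrightarrow>
        distr M (count_space UNIV) (\<lambda>\<omega>. (degree kn chi n k \<omega>, degree kn chi n l \<omega>))
        = distr M (count_space UNIV) (\<lambda>\<omega>. (degree kn chi n 1 \<omega>, degree kn chi n 2 \<omega>))"
    and D_meas: "D \<in> measurable M (count_space UNIV)"
    and p_def: "\<And>d. p d = measure M {\<omega> \<in> space M. D \<omega> = d}"
    and B: "weak_conv_m (\<lambda>n. distr M borel (\<lambda>\<omega>. real (degree kn chi n 1 \<omega>)))
                        (distr M borel (\<lambda>\<omega>. real (D \<omega>)))"
    and C: "\<And>d. (\<lambda>n. covar M (\<lambda>\<omega>. of_bool (degree kn chi n 1 \<omega> = d))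
                               (\<lambda>\<omega>. of_bool (degree kn chi n 2 \<omega> = d))) \<longlonglongrightarrow> 0"
  shows "\<forall>d. conv_in_prob M (\<lambda>n. degree_frac kn chi n d) (p d)"
proof
  fix d :: nat
  interpret prob_space M by (rule M)
  define deg where "deg = degree kn chi"
  define q where "q = (\<lambda>n. measure M {\<omega> \<in> space M. deg n 1 \<omega> = d})"
  define I where "I = (\<lambda>n k \<omega>. (of_bool (deg n k \<omega> = d) :: real))"
  define c where "c = (\<lambda>n. covar M (I n 1) (I n 2))"
  have degm: "deg n k \<in> measurable M (count_space UNIV)" if "n \<ge> 2" "k \<in> {1..kn n}" for n k
  proof -
    have "deg n k = (\<lambda>\<omega>. card {l \<in> {1..kn n}. chi n k l \<omega>})"
      by (simp add: deg_def degree_def fun_eq_iff)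
    also have "\<dots> \<in> measurable M (count_space UNIV)"
      by (rule card_meas) (use chi_meas that in auto)
    finally show ?thesis .
  qed
  have q01: "0 \<le> q n" "q n \<le> 1" for n unfolding q_def by auto
  have q_lim: "q \<longlonglongrightarrow> p d"
  proof -
    let ?F = "\<lambda>n. distr M borel (\<lambda>\<omega>. real (degree kn chi n 1 \<omega>))"
    let ?G = "distr M borel (\<lambda>\<omega>. real (D \<omega>))"
    have conv: "(\<lambda>n. cdf (?F n) x) \<longlonglongrightarrow> cdf ?G x" if "isCont (cdf ?G) x" for x
      using B that unfolding weak_conv_m_def weak_conv_def by blast
    have lim: "(\<lambda>n. cdf (?F n) (real d + 1/2) - cdf (?F n) (real d - 1/2))
        \<longlonglongrightarrow> cdf ?G (real d + 1/2) - cdf ?G (real d - 1/2)"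
      by (intro tendsto_diff conv cdf_point(2,3)[OF M D_meas])
    have e1: "cdf ?G (real d + 1/2) - cdf ?G (real d - 1/2) = p d"
      using cdf_point(1)[OF M D_meas] p_def by simp
    have "eventually (\<lambda>n. cdf (?F n) (real d + 1/2) - cdf (?F n) (real d - 1/2) = q n) sequentially"
      using eventually_ge_at_top[of 2]
    proof eventually_elim
      case (elim n)
      have "1 \<in> {1..kn n}" using kn_ge2[OF elim] by simp
      from cdf_point(1)[OF M degm[OF elim this]] show ?case by (simp add: q_def deg_def)
    qed
    from Lim_transform_eventually[OF lim[unfolded e1] this] show ?thesis .
  qed
  have mom: "integrable M (\<lambda>\<omega>. (degree_frac kn chi n d \<omega> - q n)^2) \<and>
      (\<integral>\<omega>. (degree_frac kn chi n d \<omega> - q n)^2 \<partial>M) \<le> 1 / real (kn n) + \<bar>c n\<bar>" if n2: "n \<ge> 2" for n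
  proof -
    define K where "K = kn n"
    have K2: "K \<ge> 2" using kn_ge2 n2 K_def by simp
    have Im: "I n k \<in> borel_measurable M" if "k \<in> {1..K}" for k
      unfolding I_def using meas_borel[OF degm[OF n2 that[unfolded K_def]]] by simp
    have intI: "(\<integral>\<omega>. I n k \<omega> \<partial>M) = q n" if k: "k \<in> {1..K}" for k
    proof -
      have k': "k \<in> {1..kn n}" using k K_def by simp
      have one: "1 \<in> {1..kn n}" using K2 K_def by simp
      have "(\<integral>\<omega>. I n k \<omega> \<partial>M) = (\<integral>a. (of_bool (a = d) :: real) \<partial>(distr M (count_space UNIV) (deg n k)))"
        unfolding I_def by (subst integral_distr[OF degm[OF n2 k']]) auto
      also have "\<dots> = (\<integral>a. (of_bool (a = d) :: real) \<partial>(distr M (count_space UNIV) (deg n 1)))"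
        using A1[OF n2 k'] by (simp add: deg_def)
      also have "\<dots> = (\<integral>\<omega>. I n 1 \<omega> \<partial>M)"
        unfolding I_def by (subst integral_distr[OF degm[OF n2 one]]) auto
      also have "\<dots> = q n"
      proof -
        have "I n 1 = indicator {\<omega>. deg n 1 \<omega> = d}" by (auto simp: I_def fun_eq_iff indicator_def)
        moreover have "{\<omega>. deg n 1 \<omega> = d} \<inter> space M = {\<omega> \<in> space M. deg n 1 \<omega> = d}" by auto
        ultimately show ?thesis by (simp add: q_def)
      qed
      finally show ?thesis .
    qed
    define J where "J = (\<lambda>k l. (\<integral>\<omega>. (I n k \<omega> - q n) * (I n l \<omega> - q n) \<partial>M))"
    have intg: "integrable M (\<lambda>\<omega>. (I n k \<omega> - q n) * (I n l \<omega> - q n))" if "k \<in> {1..K}" "l \<in> {1..K}" for k l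
    proof (rule integrable_const_bound[where B=1])
      show "AE x in M. norm ((I n k x - q n) * (I n l x - q n)) \<le> 1"
        using abs_prod_le1[OF q01] by (simp add: I_def)
      show "(\<lambda>\<omega>. (I n k \<omega> - q n) * (I n l \<omega> - q n)) \<in> borel_measurable M"
        using Im[OF that(1)] Im[OF that(2)] by (intro borel_measurable_times borel_measurable_diff) auto
    qed
    have pm: "(\<lambda>\<omega>. (deg n k \<omega>, deg n l \<omega>)) \<in> measurable M (count_space UNIV)"
      if "k \<in> {1..K}" "l \<in> {1..K}" for k l
      by (rule meas_comb) (use degm[OF n2] that K_def in auto)
    have Jkl: "J k l = c n" if kl: "k \<in> {1..K}" "l \<in> {1..K}" "k \<noteq> l" for k l
    proof -
      have one: "1 \<in> {1..K}" and two: "2 \<in> {1..K}" using K2 by auto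
      define g where "g = (\<lambda>(a::nat, b::nat). ((of_bool (a = d) - q n) * (of_bool (b = d) - q n) :: real))"
      have "J k l = (\<integral>x. g x \<partial>distr M (count_space UNIV) (\<lambda>\<omega>. (deg n k \<omega>, deg n l \<omega>)))"
        by (subst integral_distr[OF pm[OF kl(1,2)]]) (auto simp: J_def I_def g_def)
      also have "\<dots> = (\<integral>x. g x \<partial>distr M (count_space UNIV) (\<lambda>\<omega>. (deg n 1 \<omega>, deg n 2 \<omega>)))"
        using A2[OF n2, of k l] kl K_def by (simp add: deg_def)
      also have "\<dots> = J 1 2"
        by (subst integral_distr[OF pm[OF one two]]) (auto simp: J_def I_def g_def)
      also have "J 1 2 = c n" unfolding c_def covar_def J_def using intI[OF one] intI[OF two] by simp
      finally show ?thesis .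
    qed
    have Jkk: "J k k \<le> 1" if "k \<in> {1..K}" for k
    proof -
      have "J k k \<le> (\<integral>\<omega>. 1 \<partial>M)"
        unfolding J_def
        by (rule integral_mono[OF intg[OF that that]]) (use abs_prod_le1[OF q01] in \<open>auto simp: I_def abs_le_iff\<close>)
      then show ?thesis by (simp add: prob_space)
    qed
    have X: "degree_frac kn chi n d \<omega> - q n = (\<Sum>k\<in>{1..K}. (I n k \<omega> - q n)) / real K" for \<omega>
    proof -
      have "real (node_count kn chi n d \<omega>) = (\<Sum>k\<in>{1..K}. I n k \<omega>)"
      proof -
        have "{1..K} \<inter> {k. deg n k \<omega> = d} = {k \<in> {1..K}. deg n k \<omega> = d}" by auto
        then show ?thesis unfolding node_count_def I_def by (simp add: K_def deg_def)
      qed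
      moreover have "(\<Sum>k\<in>{1..K}. (I n k \<omega> - q n)) = (\<Sum>k\<in>{1..K}. I n k \<omega>) - real K * q n"
        by (simp add: sum_subtractf)
      moreover have "real K > 0" using K2 by simp
      ultimately show ?thesis unfolding degree_frac_def using K_def by (simp add: field_simps)
    qed
    have X2: "(degree_frac kn chi n d \<omega> - q n)^2 =
        (\<Sum>k\<in>{1..K}. \<Sum>l\<in>{1..K}. (I n k \<omega> - q n) * (I n l \<omega> - q n)) / (real K)^2" for \<omega>
      unfolding X by (simp add: power2_eq_square sum_product)
    have intg2: "integrable M (\<lambda>\<omega>. \<Sum>k\<in>{1..K}. \<Sum>l\<in>{1..K}. (I n k \<omega> - q n) * (I n l \<omega> - q n))"
      by (intro Bochner_Integration.integrable_sum intg) auto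
    have i1: "integrable M (\<lambda>\<omega>. (degree_frac kn chi n d \<omega> - q n)^2)"
      unfolding X2 using intg2 by simp
    have "(\<integral>\<omega>. (degree_frac kn chi n d \<omega> - q n)^2 \<partial>M) = (\<Sum>k\<in>{1..K}. \<Sum>l\<in>{1..K}. J k l) / (real K)^2"
    proof -
      have "(\<integral>\<omega>. (\<Sum>k\<in>{1..K}. \<Sum>l\<in>{1..K}. (I n k \<omega> - q n) * (I n l \<omega> - q n)) \<partial>M)
          = (\<Sum>k\<in>{1..K}. \<Sum>l\<in>{1..K}. J k l)"
      proof -
        have "(\<integral>\<omega>. (\<Sum>k\<in>{1..K}. \<Sum>l\<in>{1..K}. (I n k \<omega> - q n) * (I n l \<omega> - q n)) \<partial>M)
           = (\<Sum>k\<in>{1..K}. (\<integral>\<omega>. (\<Sum>l\<in>{1..K}. (I n k \<omega> - q n) * (I n l \<omega> - q n)) \<partial>M))"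
          by (rule Bochner_Integration.integral_sum) (auto intro!: Bochner_Integration.integrable_sum intg)
        also have "\<dots> = (\<Sum>k\<in>{1..K}. \<Sum>l\<in>{1..K}. J k l)"
        proof (rule sum.cong[OF refl])
          fix k assume kk: "k \<in> {1..K}"
          show "(\<integral>\<omega>. (\<Sum>l\<in>{1..K}. (I n k \<omega> - q n) * (I n l \<omega> - q n)) \<partial>M) = (\<Sum>l\<in>{1..K}. J k l)"
            unfolding J_def by (rule Bochner_Integration.integral_sum) (rule intg[OF kk], auto)
        qed
        finally show ?thesis .
      qed
      then show ?thesis unfolding X2 by simp
    qed
    also have "\<dots> \<le> (\<Sum>k\<in>{1..K}. \<Sum>l\<in>{1..K}. (of_bool (k = l) + \<bar>c n\<bar>)) / (real K)^2"
    proof (intro divide_right_mono sum_mono)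
      fix k l assume kl: "k \<in> {1..K}" "l \<in> {1..K}"
      show "J k l \<le> of_bool (k = l) + \<bar>c n\<bar>"
      proof (cases "k = l")
        case True
        have "J k l \<le> 1" using Jkk[OF kl(1)] True by simp
        moreover have "0 \<le> \<bar>c n\<bar>" by simp
        ultimately have "J k l \<le> 1 + \<bar>c n\<bar>" by linarith
        then show ?thesis using True by simp
      next
        case False
        have "J k l = c n" using Jkl[OF kl False] .
        then show ?thesis using False by simp
      qed
    qed simp
    also have "\<dots> = (real K + real K * real K * \<bar>c n\<bar>) / (real K)^2"
      by (simp add: sum.distrib algebra_simps)
    also have "\<dots> = 1 / real K + \<bar>c n\<bar>"
      using K2 by (simp add: field_simps power2_eq_square)
    finally show ?thesis using i1 K_def by simp
  qed
  have Xm: "(\<lambda>\<omega>. degree_frac kn chi n d \<omega> - r) \<in> borel_measurable M" if n2: "n \<ge> 2" for n r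
  proof -
    have "(\<lambda>\<omega>. node_count kn chi n d \<omega>) \<in> measurable M (count_space UNIV)"
      unfolding node_count_def
    proof (rule card_meas)
      fix k assume k: "k \<in> {1..kn n}"
      show "(\<lambda>\<omega>. degree kn chi n k \<omega> = d) \<in> measurable M (count_space UNIV)"
        using meas_map[OF degm[OF n2 k], of "\<lambda>a. a = d"] by (simp add: deg_def)
    qed simp
    from meas_borel[OF this, of "\<lambda>m. real m / real (card {1..kn n}) - r"]
    show ?thesis by (simp add: degree_frac_def)
  qed
  show "conv_in_prob M (\<lambda>n. degree_frac kn chi n d) (p d)"
    unfolding conv_in_prob_def
  proof (intro allI impI)
    fix \<epsilon> :: real assume e: "\<epsilon> > 0"
    have ev1: "eventually (\<lambda>n. \<bar>q n - p d\<bar> < \<epsilon>/2) sequentially"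
      using tendstoD[OF q_lim, of "\<epsilon>/2"] e by (simp add: dist_real_def)
    have b_lim: "(\<lambda>n. (1 / real (kn n) + \<bar>c n\<bar>) / (\<epsilon>/2)^2) \<longlonglongrightarrow> 0"
    proof -
      have "filterlim (\<lambda>n. real (kn n)) at_top sequentially"
        using filterlim_compose[OF filterlim_real_sequentially kn_lim] by (simp add: comp_def)
      then have "(\<lambda>n. inverse (real (kn n))) \<longlonglongrightarrow> 0" by (rule tendsto_inverse_0_at_top)
      moreover have "(\<lambda>n. \<bar>c n\<bar>) \<longlonglongrightarrow> 0"
        using tendsto_rabs_zero[OF C[of d]] by (simp add: c_def I_def deg_def)
      ultimately have "(\<lambda>n. inverse (real (kn n)) + \<bar>c n\<bar>) \<longlonglongrightarrow> 0 + 0" by (rule tendsto_add)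
      then have "(\<lambda>n. inverse (real (kn n)) + \<bar>c n\<bar>) \<longlonglongrightarrow> 0" by simp
      then have "(\<lambda>n. (inverse (real (kn n)) + \<bar>c n\<bar>) / (\<epsilon>/2)^2) \<longlonglongrightarrow> 0"
        by (rule tendsto_divide_zero)
      moreover have "(\<lambda>n. (1 / real (kn n) + \<bar>c n\<bar>) / (\<epsilon>/2)^2) = (\<lambda>n. (inverse (real (kn n)) + \<bar>c n\<bar>) / (\<epsilon>/2)^2)"
        by (simp add: inverse_eq_divide)
      ultimately show ?thesis by simp
    qed
    show "(\<lambda>n. measure M {\<omega> \<in> space M. \<bar>degree_frac kn chi n d \<omega> - p d\<bar> > \<epsilon>}) \<longlonglongrightarrow> 0"
    proof (rule tendsto_sandwich[OF _ _ tendsto_const b_lim])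
      show "eventually (\<lambda>n. 0 \<le> measure M {\<omega> \<in> space M. \<bar>degree_frac kn chi n d \<omega> - p d\<bar> > \<epsilon>}) sequentially"
        by simp
      show "eventually (\<lambda>n. measure M {\<omega> \<in> space M. \<bar>degree_frac kn chi n d \<omega> - p d\<bar> > \<epsilon>}
          \<le> (1 / real (kn n) + \<bar>c n\<bar>) / (\<epsilon>/2)^2) sequentially"
        using ev1 eventually_ge_at_top[of 2]
      proof eventually_elim
        case (elim n)
        note fm = Xm[OF elim(2), of "q n"]
        have S: "{\<omega> \<in> space M. \<epsilon>/2 \<le> \<bar>degree_frac kn chi n d \<omega> - q n\<bar>} \<in> sets M"
        proof -
          note fm[measurable]
          show ?thesis by measurable
        qed
        have "measure M {\<omega> \<in> space M. \<bar>degree_frac kn chi n d \<omega> - p d\<bar> > \<epsilon>}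
            \<le> measure M {\<omega> \<in> space M. \<epsilon>/2 \<le> \<bar>degree_frac kn chi n d \<omega> - q n\<bar>}"
        proof (rule finite_measure_mono[OF _ S], safe)
          fix x assume x: "x \<in> space M" "\<epsilon> < \<bar>degree_frac kn chi n d x - p d\<bar>"
          have "\<bar>degree_frac kn chi n d x - p d\<bar> \<le> \<bar>degree_frac kn chi n d x - q n\<bar> + \<bar>q n - p d\<bar>"
            using abs_triangle_ineq[of "degree_frac kn chi n d x - q n" "q n - p d"] by simp
          then show "\<epsilon> / 2 \<le> \<bar>degree_frac kn chi n d x - q n\<bar>" using x(2) elim(1) by linarith
        qed
        also have "\<dots> \<le> (\<integral>\<omega>. (degree_frac kn chi n d \<omega> - q n)^2 \<partial>M) / (\<epsilon>/2)^2"
          by (rule second_moment_method[OF fm]) (use mom[OF elim(2)] e in auto)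
        also have "\<dots> \<le> (1 / real (kn n) + \<bar>c n\<bar>) / (\<epsilon>/2)^2"
          by (rule divide_right_mono) (use mom[OF elim(2)] in auto)
        finally show ?case .
      qed
    qed
  qed
qed

end
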